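(* Suppose $f(i,y,z)$ is convex in $(y,z)$. For $i=0,\ldots,n-1$, $\omega\in\Omega$, $z\in\mathbb R^D$, define the convex conjugate in $y$, $$f^{\#y}(\omega,i,r,z)=\sup_{y\in\mathbb R}\{ry-f(\omega,i,y,z)\},$$ with effective domain $D^{(i,\omega,z)}_{f^{\#y}}=\{r\in\mathbb R: f^{\#y}(\omega,i,r,z)<\infty\}$; this domain is contained in $[-\alpha^{(0)}_i(\omega),\alpha^{(0)}_i(\omega)]$. Then for every $(M^0,M)\in\mathcal M_{1+D}$ and $i=0,\ldots,n-1$, $$\theta^{up}_i=\max\Big\{S_i,\;\sup_{r\in D^{(i,\omega,z^{up}_i(\omega))}_{f^{\#y}}}\frac{1}{1-r\Delta_i}\Big(\theta^{up}_{i+1}-(M^0_{i+1}-M^0_i)-f^{\#y}(i,r,z^{up}_i)\Delta_i\Big)\Big\},$$ where $\theta^{up}=\theta^{up}(M^0,M)$ and $z^{up}_i=\beta_{i+1}\theta^{up}_{i+1}-(M_{i+1}-M_i)$.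
   Context: Standing setting: $n\ge 1$ and $D\ge 1$ are integers; $(\Omega,\mathcal F,(\mathcal F_i)_{i=0,\ldots,n},P)$ is a filtered probability space and $E_i[\cdot]=E[\cdot\mid\mathcal F_i]$. The constants $\Delta_0,\ldots,\Delta_{n-1}$ are positive reals. $S=(S_i)_{i=0,\ldots,n}$ is an adapted process with values in $\mathbb R\cup\{-\infty\}$, $S_n$ real-valued, with $\sum_{i=0}^{n-1}E[|S_i\mathbf 1_{\{S_i>-\infty\}}|]+E[|S_n|]<\infty$. The random field $f:\Omega\times\{0,\ldots,n-1\}\times\mathbb R\times\mathbb R^D\to\mathbb R$ is measurable, $f(\cdot,i,y,z)$ is $\mathcal F_i$-measurable for every $(y,z)$ (the dependence on $\omega$ is suppressed), $\sum_{i=0}^{n-1}E[|f(i,0,0)|]<\infty$, and there are adapted nonnegative processes $\alpha^{(0)},\ldots,\alpha^{(D)}$ with $|f(i,y,z)-f(i,y',z')|\le\alpha^{(0)}_i|y-y'|+\sum_{d=1}^D\alpha^{(d)}_i|z_d-z'_d|$ for all $(y,z),(y',z')\in\mathbb R\times\mathbb R^D$. $\beta=(\beta_i)_{i=1,\ldots,n}$ is a bounded adapted $\mathbb R^D$-valued process, and for $i=0,\ldots,n-1$ almost surely $\alpha^{(0)}_i<1/\Delta_i$ and $\sum_{d=1}^D\alpha^{(d)}_i|\beta_{d,i+1}|\le 1/\Delta_i$. $\mathcal M_{1+D}$ is the set of pairs $(M^0,M)$ where $M^0$ is a real-valued martingale and $M=(M_1,\ldots,M_D)$ an $\mathbb R^D$-valued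 martingale with $\sum_{d=1}^D\sum_{i=0}^{n-1}E[\alpha^{(d)}_i|M_{d,i+1}-M_{d,i}|]\Delta_i<\infty$. For $(M^0,M)\in\mathcal M_{1+D}$, the (non-adapted) process $\theta^{up}=\theta^{up}(M^0,M)$ is defined pathwise by $\theta^{up}_n=S_n$ and, for $i=n-1,\ldots,0$, as the unique solution (it exists since $\alpha^{(0)}_i\Delta_i<1$) of $$\theta^{up}_i=\max\{S_i,\;\theta^{up}_{i+1}-(M^0_{i+1}-M^0_i)+f(i,\theta^{up}_i,\beta_{i+1}\theta^{up}_{i+1}-(M_{i+1}-M_i))\Delta_i\}.$$ *)

theory Defs
  imports "HOL-Probability.Probability"
begin

definition filtration :: "'a measure \<Rightarrow> (nat \<Rightarrow> 'a measure) \<Rightarrow> nat \<Rightarrow> bool" where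
  "filtration M F n \<longleftrightarrow> (\<forall>i\<le>n. subalgebra M (F i)) \<and>
     (\<forall>i j. i \<le> j \<longrightarrow> j \<le> n \<longrightarrow> sets (F i) \<subseteq> sets (F j))"

definition martingale :: "'a measure \<Rightarrow> (nat \<Rightarrow> 'a measure) \<Rightarrow> nat \<Rightarrow> (nat \<Rightarrow> 'a \<Rightarrow> real) \<Rightarrow> bool" where
  "martingale M F n X \<longleftrightarrow>
     (\<forall>i\<le>n. integrable M (X i) \<and> X i \<in> borel_measurable (F i)) \<and>
     (\<forall>i<n. AE \<omega> in M. real_cond_exp M (F i) (X (Suc i)) \<omega> = X i \<omega>)"

definition fconj :: "('a \<Rightarrow> nat \<Rightarrow> real \<Rightarrow> real^'d \<Rightarrow> real) \<Rightarrow> 'a \<Rightarrow> nat \<Rightarrow> real \<Rightarrow> real^'d \<Rightarrow> ereal" where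
  "fconj f \<omega> i r z = (SUP y. ereal (r * y - f \<omega> i y z))"

definition conj_dom :: "('a \<Rightarrow> nat \<Rightarrow> real \<Rightarrow> real^'d \<Rightarrow> real) \<Rightarrow> 'a \<Rightarrow> nat \<Rightarrow> real^'d \<Rightarrow> real set" where
  "conj_dom f \<omega> i z = {r. fconj f \<omega> i r z < \<infinity>}"

text \<open>Backward recursion: theta_aux k is theta^up at time n - k (pathwise, omega fixed).\<close>
primrec theta_aux :: "nat \<Rightarrow> (nat \<Rightarrow> 'a \<Rightarrow> ereal) \<Rightarrow> ('a \<Rightarrow> nat \<Rightarrow> real \<Rightarrow> real^'d \<Rightarrow> real)
    \<Rightarrow> (nat \<Rightarrow> 'a \<Rightarrow> real^'d) \<Rightarrow> (nat \<Rightarrow> real) \<Rightarrow> (nat \<Rightarrow> 'a \<Rightarrow> real) \<Rightarrow> (nat \<Rightarrow> 'a \<Rightarrow> real^'d)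
    \<Rightarrow> 'a \<Rightarrow> nat \<Rightarrow> real" where
  "theta_aux n S f \<beta> \<Delta> M0 Mv \<omega> 0 = real_of_ereal (S n \<omega>)"
| "theta_aux n S f \<beta> \<Delta> M0 Mv \<omega> (Suc k) =
     (let i = n - Suc k; th = theta_aux n S f \<beta> \<Delta> M0 Mv \<omega> k in
      THE x. ereal x = max (S i \<omega>)
        (ereal (th - (M0 (Suc i) \<omega> - M0 i \<omega>)
                + f \<omega> i x (th *\<^sub>R \<beta> (Suc i) \<omega> - (Mv (Suc i) \<omega> - Mv i \<omega>)) * \<Delta> i)))"

definition theta_up :: "nat \<Rightarrow> (nat \<Rightarrow> 'a \<Rightarrow> ereal) \<Rightarrow> ('a \<Rightarrow> nat \<Rightarrow> real \<Rightarrow> real^'d \<Rightarrow> real)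
    \<Rightarrow> (nat \<Rightarrow> 'a \<Rightarrow> real^'d) \<Rightarrow> (nat \<Rightarrow> real) \<Rightarrow> (nat \<Rightarrow> 'a \<Rightarrow> real) \<Rightarrow> (nat \<Rightarrow> 'a \<Rightarrow> real^'d)
    \<Rightarrow> nat \<Rightarrow> 'a \<Rightarrow> real" where
  "theta_up n S f \<beta> \<Delta> M0 Mv i \<omega> = theta_aux n S f \<beta> \<Delta> M0 Mv \<omega> (n - i)"

definition z_up :: "nat \<Rightarrow> (nat \<Rightarrow> 'a \<Rightarrow> ereal) \<Rightarrow> ('a \<Rightarrow> nat \<Rightarrow> real \<Rightarrow> real^'d \<Rightarrow> real)
    \<Rightarrow> (nat \<Rightarrow> 'a \<Rightarrow> real^'d) \<Rightarrow> (nat \<Rightarrow> real) \<Rightarrow> (nat \<Rightarrow> 'a \<Rightarrow> real) \<Rightarrow> (nat \<Rightarrow> 'a \<Rightarrow> real^'d)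
    \<Rightarrow> nat \<Rightarrow> 'a \<Rightarrow> real^'d" where
  "z_up n S f \<beta> \<Delta> M0 Mv i \<omega> =
     theta_up n S f \<beta> \<Delta> M0 Mv (Suc i) \<omega> *\<^sub>R \<beta> (Suc i) \<omega> - (Mv (Suc i) \<omega> - Mv i \<omega>)"

end

theory Submission
  imports Defs
begin

lemma subgrad_exists:
  fixes g :: "real \<Rightarrow> real"
  assumes cv: "convex_on UNIV g"
  shows "\<exists>r. \<forall>t. g t \<ge> g y + r * (t - y)"
proof -
  define sl where "sl t = (g t - g y) / (t - y)" for t
  define R where "R = sl ` {y<..}"
  have ne: "R \<noteq> {}" unfolding R_def by auto
  have left: "sl s \<le> sl t" if "s < y" "y < t" for s t
  proof -
    have "(g s - g y) / (s - y) \<le> (g s - g t) / (s - t)"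
      "(g s - g t) / (s - t) \<le> (g y - g t) / (y - t)"
      using convex_on_slope_le[OF cv _ _ that] by auto
    then show ?thesis unfolding sl_def by (smt (verit) minus_divide_divide minus_diff_eq)
  qed
  have bdd: "bdd_below R" unfolding R_def bdd_below_def
    using left[of "y - 1"] by auto
  define r where "r = Inf R"
  have "g t \<ge> g y + r * (t - y)" for t
  proof (cases "t > y")
    case True
    then have "r \<le> sl t" unfolding r_def R_def using bdd R_def by (intro cInf_lower) auto
    then have "r * (t - y) \<le> sl t * (t - y)" using True by (intro mult_right_mono) auto
    also have "\<dots> = g t - g y" using True unfolding sl_def by auto
    finally show ?thesis by simp
  next
    case False
    show ?thesis
    proof (cases "t = y")
      case True then show ?thesis by simp
    next
      case False2: False
      with False have ty: "t < y" by simp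
      have "sl t \<le> r" unfolding r_def using ne
        by (intro cInf_greatest) (auto simp: R_def intro: left[OF ty])
      then have "sl t * (t - y) \<ge> r * (t - y)" using ty by (intro mult_right_mono_neg) auto
      also have "sl t * (t - y) = g t - g y" using ty unfolding sl_def by auto
      finally show ?thesis by simp
    qed
  qed
  then show ?thesis by blast
qed

lemma core:
  fixes g :: "real \<Rightarrow> real" and S :: ereal and a \<Delta> c :: real
  assumes D: "\<Delta> > 0" and c0: "c \<ge> 0" and cD: "c < 1 / \<Delta>"
    and lip: "\<And>y y'. \<bar>g y - g y'\<bar> \<le> c * \<bar>y - y'\<bar>"
    and cv: "convex_on UNIV g" and Sn: "S \<noteq> \<infinity>"
  shows "ereal (THE x. ereal x = max S (ereal (a + g x * \<Delta>))) =
     max S (SUP r \<in> {r. (SUP y. ereal (r * y - g y)) < \<infinity>}.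
        ereal ((a - real_of_ereal (SUP y. ereal (r * y - g y)) * \<Delta>) / (1 - r * \<Delta>)))"
proof -
  define h where "h y = a + g y * \<Delta>" for y
  define k where "k = c * \<Delta>"
  have k0: "k \<ge> 0" and k1: "k < 1" using c0 D cD by (auto simp: k_def field_simps)
  have hlip: "\<bar>h y - h y'\<bar> \<le> k * \<bar>y - y'\<bar>" for y y'
  proof -
    have "\<bar>h y - h y'\<bar> = \<bar>g y - g y'\<bar> * \<Delta>" using D
      by (simp add: h_def abs_mult left_diff_distrib[symmetric])
    also have "\<dots> \<le> c * \<bar>y - y'\<bar> * \<Delta>" using lip D by (intro mult_right_mono) auto
    finally show ?thesis by (simp add: k_def algebra_simps)
  qed
  have mono: "y1 - h y1 < y2 - h y2" if "y1 < y2" for y1 y2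
  proof -
    have "h y2 - h y1 \<le> k * (y2 - y1)" using hlip[of y2 y1] that by auto
    moreover have "k * (y2 - y1) < y2 - y1" using k1 that by simp
    ultimately show ?thesis by simp
  qed
  have contg: "continuous_on UNIV g"
    by (rule lipschitz_on_continuous_on[of c]) (auto simp: lipschitz_on_def dist_real_def lip c0)
  have conth: "continuous_on UNIV (\<lambda>y. y - h y)"
    unfolding h_def by (intro continuous_intros contg)
  define m where "m = \<bar>0 - h 0\<bar> / (1 - k)"
  have m0: "m \<ge> 0" using k1 by (simp add: m_def)
  have "h m - h 0 \<le> k * m" using hlip[of m 0] m0 by auto
  moreover have "(1 - k) * m = \<bar>h 0\<bar>" using k1 by (simp add: m_def)
  ultimately have p1: "0 \<le> m - h m" by (simp add: algebra_simps)
  have "h 0 - h (-m) \<le> k * m" using hlip[of 0 "-m"] m0 by auto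
  moreover have "(1 - k) * m = \<bar>h 0\<bar>" using k1 by (simp add: m_def)
  ultimately have p2: "-m - h (-m) \<le> 0" by (simp add: algebra_simps)
  obtain ys where ys: "ys - h ys = 0"
    using IVT'[of "\<lambda>y. y - h y" "-m" 0 m] p1 p2 m0 continuous_on_subset[OF conth] by auto
  then have hys: "h ys = ys" by simp
  define xs where "xs = (if S \<le> ereal ys then ys else real_of_ereal S)"
  have fixp: "ereal xs = max S (ereal (h xs))"
  proof (cases "S \<le> ereal ys")
    case True then show ?thesis by (simp add: xs_def hys max_def)
  next
    case False
    then obtain s where s: "S = ereal s" using Sn by (cases S) auto
    with False have "s > ys" by simp
    then have "s - h s > 0" using mono[of ys s] hys by simp
    then show ?thesis using False s by (simp add: xs_def max_def)
  qed
  have uniq: "x = xs" if "ereal x = max S (ereal (h x))" for x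
  proof -
    have gen: "x1 \<le> x2" if a1: "ereal x1 = max S (ereal (h x1))" and a2: "ereal x2 = max S (ereal (h x2))" for x1 x2
    proof (rule ccontr)
      assume "\<not> x1 \<le> x2"
      then have lt: "x2 < x1" by simp
      show False
      proof (cases "ereal x1 = S")
        case True
        then have "ereal x2 \<ge> ereal x1" using a2 by simp
        then show False using lt by simp
      next
        case False
        then have "ereal x1 = ereal (h x1)" using a1 by (auto simp: max_def split: if_splits)
        then have e1: "x1 - h x1 = 0" by simp
        have "ereal x2 \<ge> ereal (h x2)" using a2 by simp
        then have "x2 - h x2 \<ge> 0" by simp
        with mono[OF lt] e1 show False by simp
      qed
    qed
    have "x \<le> xs" by (rule gen[OF that fixp])
    moreover have "xs \<le> x" by (rule gen[OF fixp that])
    ultimately show ?thesis by simp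
  qed
  have The: "(THE x. ereal x = max S (ereal (a + g x * \<Delta>))) = xs"
  proof -
    have eq: "(ereal x = max S (ereal (a + g x * \<Delta>))) = (ereal x = max S (ereal (h x)))" for x
      by (simp add: h_def)
    show ?thesis unfolding eq using fixp uniq by (rule the_equality)
  qed
  define fc where "fc r = (SUP y. ereal (r * y - g y))" for r
  define dom where "dom = {r. fc r < \<infinity>}"
  have fc_ge: "fc r \<ge> ereal (r * y - g y)" for r y unfolding fc_def by (rule SUP_upper) auto
  have dom_bd: "r \<le> c" if "r \<in> dom" for r
  proof (rule ccontr)
    assume "\<not> r \<le> c"
    then have rc: "r > c" by simp
    have "fc r \<noteq> -\<infinity>" using fc_ge[of r 0] by auto
    moreover have "fc r \<noteq> \<infinity>" using that by (auto simp: dom_def)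
    ultimately obtain B where B: "fc r = ereal B" by (cases "fc r") auto
    define y where "y = (\<bar>B\<bar> + \<bar>g 0\<bar> + 1) / (r - c)"
    have y0: "y \<ge> 0" using rc by (simp add: y_def)
    have "g y - g 0 \<le> c * y" using lip[of y 0] y0 by simp
    then have "r * y - g y \<ge> (r - c) * y - g 0" by (simp add: algebra_simps)
    also have "(r - c) * y = \<bar>B\<bar> + \<bar>g 0\<bar> + 1" using rc by (simp add: y_def)
    finally have "r * y - g y > B" by linarith
    with fc_ge[of r y] B show False by simp
  qed
  have pos: "1 - r * \<Delta> > 0" if "r \<in> dom" for r
  proof -
    have "r * \<Delta> \<le> c * \<Delta>" using dom_bd[OF that] D by (intro mult_right_mono) auto
    also have "c * \<Delta> < 1" using k1 by (simp add: k_def)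
    finally show ?thesis by simp
  qed
  have upper: "(a - real_of_ereal (fc r) * \<Delta>) / (1 - r * \<Delta>) \<le> ys" if "r \<in> dom" for r
  proof -
    have "fc r \<noteq> -\<infinity>" using fc_ge[of r 0] by auto
    moreover have "fc r \<noteq> \<infinity>" using that by (auto simp: dom_def)
    ultimately obtain B where B: "fc r = ereal B" by (cases "fc r") auto
    have "B \<ge> r * ys - g ys" using fc_ge[of r ys] B by simp
    then have "B * \<Delta> \<ge> (r * ys - g ys) * \<Delta>" using D by (intro mult_right_mono) auto
    then have "a - B * \<Delta> \<le> ys * (1 - r * \<Delta>)" using hys by (simp add: h_def algebra_simps)
    then show ?thesis using B pos[OF that] by (simp add: divide_le_eq mult.commute)
  qed
  obtain r0 where r0: "\<And>t. g t \<ge> g ys + r0 * (t - ys)" using subgrad_exists[OF cv, of ys] by blast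
  have fc0: "fc r0 = ereal (r0 * ys - g ys)"
  proof (rule antisym)
    show "fc r0 \<le> ereal (r0 * ys - g ys)" unfolding fc_def
    proof (intro SUP_least)
      fix y :: real
      have "g ys + r0 * (y - ys) \<le> g y" by (rule r0)
      then show "ereal (r0 * y - g y) \<le> ereal (r0 * ys - g ys)" by (simp add: algebra_simps)
    qed
  qed (rule fc_ge)
  have r0dom: "r0 \<in> dom" using fc0 by (simp add: dom_def)
  have val0: "(a - real_of_ereal (fc r0) * \<Delta>) / (1 - r0 * \<Delta>) = ys"
  proof -
    have "a - real_of_ereal (fc r0) * \<Delta> = ys * (1 - r0 * \<Delta>)"
      using fc0 hys by (simp add: h_def algebra_simps)
    then show ?thesis using pos[OF r0dom] by simp
  qed
  have SUPeq: "(SUP r \<in> dom. ereal ((a - real_of_ereal (fc r) * \<Delta>) / (1 - r * \<Delta>))) = ereal ys"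
  proof (rule antisym)
    show "(SUP r \<in> dom. ereal ((a - real_of_ereal (fc r) * \<Delta>) / (1 - r * \<Delta>))) \<le> ereal ys"
      using upper by (intro SUP_least) auto
    show "ereal ys \<le> (SUP r \<in> dom. ereal ((a - real_of_ereal (fc r) * \<Delta>) / (1 - r * \<Delta>)))"
      using val0 r0dom by (intro SUP_upper2[of r0]) auto
  qed
  have "ereal xs = max S (ereal ys)"
  proof (cases "S \<le> ereal ys")
    case True then show ?thesis by (simp add: xs_def max_def)
  next
    case False
    then obtain s where s: "S = ereal s" using Sn by (cases S) auto
    then show ?thesis using False by (simp add: xs_def max_def)
  qed
  then show ?thesis using The SUPeq unfolding fc_def[abs_def] dom_def by simp
qed


theorem proposition3p2:
  fixes M :: "'a measure" and F :: "nat \<Rightarrow> 'a measure" and n :: nat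
    and \<Delta> :: "nat \<Rightarrow> real"
    and S :: "nat \<Rightarrow> 'a \<Rightarrow> ereal"
    and f :: "'a \<Rightarrow> nat \<Rightarrow> real \<Rightarrow> real^'d \<Rightarrow> real"
    and \<alpha>0 :: "nat \<Rightarrow> 'a \<Rightarrow> real" and \<alpha> :: "'d \<Rightarrow> nat \<Rightarrow> 'a \<Rightarrow> real"
    and \<beta> :: "nat \<Rightarrow> 'a \<Rightarrow> real^'d"
    and M0 :: "nat \<Rightarrow> 'a \<Rightarrow> real" and Mv :: "nat \<Rightarrow> 'a \<Rightarrow> real^'d"
  assumes prob: "prob_space M"
    and filt: "filtration M F n"
    and n_pos: "n \<ge> 1"
    and Delta_pos: "\<forall>i<n. \<Delta> i > 0"
    (* S: adapted, values in R \<union> {-\<infinity>}, S_n real, integrability *)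
    and S_adapt: "\<forall>i\<le>n. S i \<in> borel_measurable (F i)"
    and S_not_pinf: "\<forall>i\<le>n. \<forall>\<omega>\<in>space M. S i \<omega> \<noteq> \<infinity>"
    and S_n_real: "\<forall>\<omega>\<in>space M. S n \<omega> \<noteq> -\<infinity>"
    and S_int: "\<forall>i<n. integrable M (\<lambda>\<omega>. if S i \<omega> > -\<infinity> then real_of_ereal (S i \<omega>) else 0)"
    and S_n_int: "integrable M (\<lambda>\<omega>. real_of_ereal (S n \<omega>))"
    (* f: measurable, adapted, integrable at 0, Lipschitz, convex *)
    and f_meas: "\<forall>i<n. (\<lambda>(\<omega>, y, z). f \<omega> i y z) \<in> borel_measurable (M \<Otimes>\<^sub>M (borel \<Otimes>\<^sub>M borel))"
    and f_adapt: "\<forall>i<n. \<forall>y z. (\<lambda>\<omega>. f \<omega> i y z) \<in> borel_measurable (F i)"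
    and f_int: "\<forall>i<n. integrable M (\<lambda>\<omega>. f \<omega> i 0 0)"
    and \<alpha>0_adapt: "\<forall>i\<le>n. \<alpha>0 i \<in> borel_measurable (F i)"
    and \<alpha>_adapt: "\<forall>d. \<forall>i\<le>n. \<alpha> d i \<in> borel_measurable (F i)"
    and \<alpha>0_nonneg: "\<forall>i\<le>n. \<forall>\<omega>\<in>space M. \<alpha>0 i \<omega> \<ge> 0"
    and \<alpha>_nonneg: "\<forall>d. \<forall>i\<le>n. \<forall>\<omega>\<in>space M. \<alpha> d i \<omega> \<ge> 0"
    and f_lip: "\<forall>i<n. \<forall>\<omega>\<in>space M. \<forall>y y' z z'.
        \<bar>f \<omega> i y z - f \<omega> i y' z'\<bar> \<le> \<alpha>0 i \<omega> * \<bar>y - y'\<bar> + (\<Sum>d\<in>UNIV. \<alpha> d i \<omega> * \<bar>z $ d - z' $ d\<bar>)"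
    and f_convex: "\<forall>i<n. \<forall>\<omega>\<in>space M. convex_on UNIV (\<lambda>(y, z). f \<omega> i y z)"
    (* beta: bounded, adapted *)
    and \<beta>_adapt: "\<forall>i\<in>{1..n}. \<beta> i \<in> borel_measurable (F i)"
    and \<beta>_bdd: "\<exists>C. \<forall>i\<in>{1..n}. \<forall>\<omega>\<in>space M. norm (\<beta> i \<omega>) \<le> C"
    and \<alpha>0_small: "\<forall>i<n. AE \<omega> in M. \<alpha>0 i \<omega> < 1 / \<Delta> i"
    and \<alpha>\<beta>_small: "\<forall>i<n. AE \<omega> in M. (\<Sum>d\<in>UNIV. \<alpha> d i \<omega> * \<bar>\<beta> (Suc i) \<omega> $ d\<bar>) \<le> 1 / \<Delta> i"
    (* (M0, M) \<in> M_{1+D} *)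
    and M0_mart: "martingale M F n M0"
    and Mv_mart: "\<forall>d. martingale M F n (\<lambda>i \<omega>. Mv i \<omega> $ d)"
    and Mv_int: "(\<Sum>d\<in>UNIV. \<Sum>i<n.
        (\<integral>\<^sup>+ \<omega>. ennreal (\<alpha> d i \<omega> * \<bar>Mv (Suc i) \<omega> $ d - Mv i \<omega> $ d\<bar>) \<partial>M) * ennreal (\<Delta> i)) < \<infinity>"
  shows "AE \<omega> in M. \<forall>i<n.
     ereal (theta_up n S f \<beta> \<Delta> M0 Mv i \<omega>) =
       max (S i \<omega>)
         (SUP r \<in> conj_dom f \<omega> i (z_up n S f \<beta> \<Delta> M0 Mv i \<omega>).
            ereal ((theta_up n S f \<beta> \<Delta> M0 Mv (Suc i) \<omega> - (M0 (Suc i) \<omega> - M0 i \<omega>)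
                    - real_of_ereal (fconj f \<omega> i r (z_up n S f \<beta> \<Delta> M0 Mv i \<omega>)) * \<Delta> i)
                   / (1 - r * \<Delta> i)))"
proof -
  interpret prob_space M by (rule prob)
  have AE: "AE \<omega> in M. \<forall>i\<in>{..<n}. \<alpha>0 i \<omega> < 1 / \<Delta> i"
    using \<alpha>0_small by (intro eventually_ball_finite) auto
  show ?thesis using AE_space AE
  proof eventually_elim
    case (elim \<omega>)
    show ?case
    proof (intro allI impI)
      fix i assume i: "i < n"
      define z where "z = z_up n S f \<beta> \<Delta> M0 Mv i \<omega>"
      have ni: "n - i = Suc (n - Suc i)" "n - Suc (n - Suc i) = i" using i by auto
      have th: "theta_up n S f \<beta> \<Delta> M0 Mv i \<omega> = (THE x. ereal x = max (S i \<omega>)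
          (ereal (theta_up n S f \<beta> \<Delta> M0 Mv (Suc i) \<omega> - (M0 (Suc i) \<omega> - M0 i \<omega>)
             + f \<omega> i x z * \<Delta> i)))"
        unfolding theta_up_def z_def z_up_def ni(1) by (simp add: Let_def ni(2))
      have D: "\<Delta> i > 0" using Delta_pos i by auto
      have c0: "\<alpha>0 i \<omega> \<ge> 0" using \<alpha>0_nonneg i elim by auto
      have cD: "\<alpha>0 i \<omega> < 1 / \<Delta> i" using elim i by auto
      have lip: "\<bar>f \<omega> i y z - f \<omega> i y' z\<bar> \<le> \<alpha>0 i \<omega> * \<bar>y - y'\<bar>" for y y'
      proof -
        have "\<bar>f \<omega> i y z - f \<omega> i y' z\<bar> \<le> \<alpha>0 i \<omega> * \<bar>y - y'\<bar> + (\<Sum>d\<in>UNIV. \<alpha> d i \<omega> * \<bar>z $ d - z $ d\<bar>)"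
          using f_lip i elim by blast
        then show ?thesis by simp
      qed
      have cvj: "convex_on UNIV (\<lambda>(y, z). f \<omega> i y z)" using f_convex i elim by auto
      have cv: "convex_on UNIV (\<lambda>y. f \<omega> i y z)"
      proof (rule convex_onI)
        fix t x y :: real assume t: "t > 0" "t < 1"
        have "(\<lambda>(y, z). f \<omega> i y z) ((1 - t) *\<^sub>R (x, z) + t *\<^sub>R (y, z))
            \<le> (1 - t) * (\<lambda>(y, z). f \<omega> i y z) (x, z) + t * (\<lambda>(y, z). f \<omega> i y z) (y, z)"
          using t by (intro convex_onD[OF cvj]) auto
        moreover have "(1 - t) *\<^sub>R (x, z) + t *\<^sub>R (y, z) = ((1 - t) *\<^sub>R x + t *\<^sub>R y, z)"
          by (simp add: algebra_simps)
        ultimately show "f \<omega> i ((1 - t) *\<^sub>R x + t *\<^sub>R y) z \<le> (1 - t) * f \<omega> i x z + t * f \<omega> i y z"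
          by simp
      qed simp
      have Sn: "S i \<omega> \<noteq> \<infinity>" using S_not_pinf i elim by auto
      show "ereal (theta_up n S f \<beta> \<Delta> M0 Mv i \<omega>) =
       max (S i \<omega>)
         (SUP r \<in> conj_dom f \<omega> i (z_up n S f \<beta> \<Delta> M0 Mv i \<omega>).
            ereal ((theta_up n S f \<beta> \<Delta> M0 Mv (Suc i) \<omega> - (M0 (Suc i) \<omega> - M0 i \<omega>)
                    - real_of_ereal (fconj f \<omega> i r (z_up n S f \<beta> \<Delta> M0 Mv i \<omega>)) * \<Delta> i)
                   / (1 - r * \<Delta> i)))"
        unfolding th z_def[symmetric] conj_dom_def fconj_def
        by (rule core[OF D c0 cD lip cv Sn])
    qed
  qed
qed

end
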